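(* Let $\alpha\ge2$, $\varepsilon\ge0$, $\ell,t\ge1$ and $1\le h\le\alpha\ell+\varepsilon$ be integers, and $q$ a prime power. Let $\gamma=3.48$, $\beta=\big(\frac{(\alpha-1)!}{2e\gamma\alpha}\big)^{1/(\alpha-1)}$ and $f(t)=(\alpha\ell+\varepsilon-h)\varepsilon t^2+(\alpha\ell+2\varepsilon-h)t+1$. If $r\le\beta\,q^{f(t)/(\alpha-1)}$, then the $(\varepsilon,\ell)$-$\mathcal N_{h,r,\alpha\ell+\varepsilon}$ network has a $(q,t)$-linear solution, i.e., there exist matrices $\boldsymbol A_1,\dots,\boldsymbol A_r\in\mathbb F_q^{\ell t\times ht}$ such that for every $1\le i_1<\dots<i_\alpha\le r$ the stacked matrix $\begin{pmatrix}\boldsymbol A_{i_1}\\ \vdots\\ \boldsymbol A_{i_\alpha}\end{pmatrix}$ has rank at least $(h-\varepsilon)t$.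
   Context: The generalized combination network $(\varepsilon,\ell)$-$\mathcal N_{h,r,\alpha\ell+\varepsilon}$ has a source with $h$ messages, $r$ middle nodes each connected to the source by $\ell$ parallel links, and one receiver for each $\alpha$-subset of middle nodes, connected to each of those $\alpha$ nodes by $\ell$ links and to the source by $\varepsilon$ direct links. A $(q,t)$-linear solution (messages in $\mathbb F_q^t$) exists if and only if there are coding matrices $\boldsymbol A_1,\dots,\boldsymbol A_r\in\mathbb F_q^{\ell t\times ht}$ for the middle nodes such that every $\alpha$ of them stacked have rank at least $(h-\varepsilon)t$ (the direct links then supply the remaining information). $e$ is Euler's number. *)

theory Defs
  imports "HOL-Analysis.Analysis" "Jordan_Normal_Form.DL_Rank"
begin

definition stack_mat :: "nat \<Rightarrow> nat \<Rightarrow> (nat \<Rightarrow> 'a mat) \<Rightarrow> nat list \<Rightarrow> 'a mat" where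
  "stack_mat m n A is = mat (length is * m) n (\<lambda>(i, j). A (is ! (i div m)) $$ (i mod m, j))"

definition mat_rank :: "'a::field mat \<Rightarrow> nat" where
  "mat_rank M = vec_space.rank (dim_row M) M"

end

theory Submission
  imports Defs
begin

datatype 'a item = Piv "'a list" | Dep "'a list"

fun wfd :: "nat \<Rightarrow> nat \<Rightarrow> 'a item list \<Rightarrow> bool" where
  "wfd m p [] = True"
| "wfd m p (Piv v # ds) = (length v = m \<and> wfd m (Suc p) ds)"
| "wfd m p (Dep c # ds) = (length c = p \<and> wfd m p ds)"

fun npiv :: "'a item list \<Rightarrow> nat" where
  "npiv [] = 0"
| "npiv (Piv v # ds) = Suc (npiv ds)"
| "npiv (Dep c # ds) = npiv ds"

definition Desc :: "nat \<Rightarrow> nat \<Rightarrow> nat \<Rightarrow> nat \<Rightarrow> 'a item list set" where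
  "Desc m p n \<rho> = {ds. wfd m p ds \<and> length ds = n \<and> npiv ds = \<rho>}"

lemma npiv_le: "npiv ds \<le> length ds"
  by (induction ds rule: npiv.induct) auto

lemma Desc_empty: "n < \<rho> \<Longrightarrow> Desc m p n \<rho> = {}"
  unfolding Desc_def using npiv_le by (auto simp: not_le[symmetric])

lemma Desc_0: "Desc m p 0 \<rho> \<subseteq> {[]}"
  unfolding Desc_def by auto

lemma Desc_Suc: "Desc m p (Suc n) \<rho> \<subseteq>
   (if \<rho> = 0 then {} else (\<lambda>(v,ds). Piv v # ds) ` ({v. length v = m} \<times> Desc m (Suc p) n (\<rho> - 1)))
   \<union> (\<lambda>(c,ds). Dep c # ds) ` ({c. length c = p} \<times> Desc m p n \<rho>)"
proof
  fix ds assume dsD: "ds \<in> Desc m p (Suc n) \<rho>"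
  then have w0: "wfd m p ds" "length ds = Suc n" "npiv ds = \<rho>" unfolding Desc_def by simp_all
  then obtain x ds' where ds: "ds = x # ds'" by (cases ds) simp_all
  have w: "wfd m p (x # ds')" "length ds' = n" "npiv (x # ds') = \<rho>" using w0 ds by simp_all
  show "ds \<in> (if \<rho> = 0 then {} else (\<lambda>(v,ds). Piv v # ds) ` ({v. length v = m} \<times> Desc m (Suc p) n (\<rho> - 1)))
   \<union> (\<lambda>(c,ds). Dep c # ds) ` ({c. length c = p} \<times> Desc m p n \<rho>)"
  proof (cases x)
    case (Piv v)
    have r0: "\<rho> = Suc (npiv ds')" using w Piv by simp
    have "(v, ds') \<in> {v. length v = m} \<times> Desc m (Suc p) n (\<rho> - 1)"
      using w Piv r0 unfolding Desc_def by simp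
    then have "ds \<in> (\<lambda>(v,ds). Piv v # ds) ` ({v. length v = m} \<times> Desc m (Suc p) n (\<rho> - 1))"
      by (rule rev_image_eqI) (simp add: ds Piv)
    then show ?thesis using r0 by (intro UnI1) simp
  next
    case (Dep c)
    have "(c, ds') \<in> {c. length c = p} \<times> Desc m p n \<rho>"
      using w Dep unfolding Desc_def by simp
    then have "ds \<in> (\<lambda>(c,ds). Dep c # ds) ` ({c. length c = p} \<times> Desc m p n \<rho>)"
      by (rule rev_image_eqI) (simp add: ds Dep)
    then show ?thesis by (rule UnI2)
  qed
qed

lemma finite_len_lists: "finite {v :: 'a::finite list. length v = m}"
  using finite_lists_length_eq[of "UNIV :: 'a set" m] by simp

lemma card_len_lists: "card {v :: 'a::finite list. length v = m} = CARD('a) ^ m"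
  using card_lists_length_eq[of "UNIV :: 'a set" m] by simp

lemma finite_Desc: "finite (Desc m p n \<rho> :: 'a::finite item list set)"
proof (induction n arbitrary: p \<rho>)
  case 0
  show ?case by (rule finite_subset[OF Desc_0]) simp
next
  case (Suc n)
  have f1: "finite ({v::'a list. length v = m} \<times> (Desc m (Suc p) n (\<rho> - 1) :: 'a item list set))"
    by (rule finite_cartesian_product[OF finite_len_lists Suc.IH])
  have f2: "finite ({c::'a list. length c = p} \<times> (Desc m p n \<rho> :: 'a item list set))"
    by (rule finite_cartesian_product[OF finite_len_lists Suc.IH])
  have finPP: "finite (if \<rho> = 0 then {} else (\<lambda>(v,ds). Piv v # ds) ` ({v::'a list. length v = m} \<times> (Desc m (Suc p) n (\<rho> - 1) :: 'a item list set)))"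
  proof (cases "\<rho> = 0")
    case True then show ?thesis by (subst if_P[OF True]) (rule finite.emptyI)
  next
    case False then show ?thesis by (subst if_not_P[OF False]) (rule finite_imageI[OF f1])
  qed
  have finDD: "finite ((\<lambda>(c,ds). Dep c # ds) ` ({c::'a list. length c = p} \<times> (Desc m p n \<rho> :: 'a item list set)))"
    by (rule finite_imageI[OF f2])
  show ?case
    by (rule finite_subset[OF Desc_Suc]) (rule finite_UnI[OF finPP finDD])
qed

fun Kc :: "real \<Rightarrow> nat \<Rightarrow> real" where
  "Kc q 0 = 1"
| "Kc q (Suc r) = Kc q r / (1 - 1 / q ^ Suc r)"

lemma Kc_pos: "q > 1 \<Longrightarrow> Kc q r > 0"
proof (induction r)
  case (Suc r)
  have "q ^ Suc r > 1" using Suc.prems one_less_power[of q "Suc r"] by simp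
  then have "1 - 1 / q ^ Suc r > 0" by (simp add: field_simps)
  then show ?case using Suc by simp
qed simp

lemma step_Piv:
  assumes Q1: "Q > 1" and a: "a \<le> Q ^ m * (Kc Q r * Q ^ (m*r + r*d + Suc p*d))"
  shows "a \<le> Kc Q r * Q ^ (m * Suc r + Suc r * d + p * d)"
proof -
  have "Q ^ m * (Kc Q r * Q ^ (m*r + r*d + Suc p*d)) = Kc Q r * Q ^ (m + (m*r + r*d + Suc p*d))"
    by (simp add: power_add)
  also have "m + (m*r + r*d + Suc p*d) = m * Suc r + Suc r * d + p * d"
    by (simp add: algebra_simps)
  finally have eq: "Q ^ m * (Kc Q r * Q ^ (m*r + r*d + Suc p*d)) = Kc Q r * Q ^ (m * Suc r + Suc r * d + p * d)" .
  show ?thesis by (subst eq[symmetric]) (rule a)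
qed

lemma step_Dep:
  assumes Q1: "Q > 1" and c: "c \<le> Kc Q (Suc r) * Q ^ (m * Suc r + Suc r * d + p * d)"
    and b: "b \<le> Q ^ p * c"
  shows "b * Q ^ Suc r \<le> Kc Q (Suc r) * Q ^ (m * Suc r + Suc r * Suc d + p * Suc d)"
proof -
  have "Q ^ p * c \<le> Q ^ p * (Kc Q (Suc r) * Q ^ (m * Suc r + Suc r * d + p * d))"
    by (rule mult_left_mono[OF c]) (use Q1 in simp)
  then have "b * Q ^ Suc r \<le> Q ^ p * (Kc Q (Suc r) * Q ^ (m * Suc r + Suc r * d + p * d)) * Q ^ Suc r"
    using b Q1 by (intro mult_right_mono) auto
  also have "\<dots> = Kc Q (Suc r) * Q ^ (p + (m * Suc r + Suc r * d + p * d) + Suc r)"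
    by (simp add: power_add)
  also have "p + (m * Suc r + Suc r * d + p * d) + Suc r = m * Suc r + Suc r * Suc d + p * Suc d"
    by (simp add: algebra_simps)
  finally show ?thesis .
qed

lemma step_comb:
  assumes Q1: "Q > 1" and a: "a \<le> Kc Q r * Q ^ E" and b: "b * Q ^ Suc r \<le> Kc Q (Suc r) * Q ^ E"
  shows "a + b \<le> Kc Q (Suc r) * Q ^ E"
proof -
  define x where "x = Q ^ Suc r"
  have x1: "x > 1" unfolding x_def using one_less_power[OF Q1, of "Suc r"] by simp
  have K1: "Kc Q (Suc r) = Kc Q r / (1 - 1 / x)" unfolding x_def by simp
  have K2: "1 - 1 / x = (x - 1) / x" using x1 by (simp add: field_simps)
  have Kx: "Kc Q (Suc r) * (x - 1) = Kc Q r * x"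
    unfolding K1 K2 using x1 by simp
  have bb: "b \<le> Kc Q (Suc r) * Q ^ E / x"
    using b x1 unfolding x_def[symmetric] by (subst pos_le_divide_eq) (simp_all del: Kc.simps)
  have kr: "Kc Q r = Kc Q (Suc r) * (x - 1) / x"
    by (subst eq_divide_eq) (use x1 Kx in \<open>simp del: Kc.simps\<close>)
  have "a + b \<le> Kc Q r * Q ^ E + Kc Q (Suc r) * Q ^ E / x" using a bb by linarith
  also have "Kc Q r * Q ^ E = Kc Q (Suc r) * Q ^ E * (x - 1) / x"
    unfolding kr by (simp add: algebra_simps del: Kc.simps)
  also have "Kc Q (Suc r) * Q ^ E * (x - 1) / x + Kc Q (Suc r) * Q ^ E / x = Kc Q (Suc r) * Q ^ E"
    using x1 by (simp add: field_simps del: Kc.simps)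
  finally show ?thesis .
qed

lemma Desc_card:
  assumes q2: "CARD('a::finite) \<ge> 2"
  shows "\<rho> \<le> n \<Longrightarrow> real (card (Desc m p n \<rho> :: 'a item list set))
           \<le> Kc (real CARD('a)) \<rho> * real CARD('a) ^ (m*\<rho> + \<rho>*(n-\<rho>) + p*(n-\<rho>))"
proof (induction n arbitrary: p \<rho>)
  case 0
  then have "card (Desc m p 0 \<rho> :: 'a item list set) \<le> 1"
    using card_mono[OF _ Desc_0, of m p \<rho>] by simp
  then show ?case using 0 by simp
next
  case (Suc n)
  define Q where "Q = real CARD('a)"
  have Q1: "Q > 1" using q2 unfolding Q_def by simp
  let ?PP = "(if \<rho> = 0 then {} else (\<lambda>(v,ds). Piv v # ds) ` ({v::'a list. length v = m} \<times> (Desc m (Suc p) n (\<rho> - 1) :: 'a item list set)))"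
  let ?DD = "(\<lambda>(c,ds). Dep c # ds) ` ({c::'a list. length c = p} \<times> (Desc m p n \<rho> :: 'a item list set))"
  have f1: "finite ({v::'a list. length v = m} \<times> (Desc m (Suc p) n (\<rho> - 1) :: 'a item list set))"
    by (rule finite_cartesian_product[OF finite_len_lists finite_Desc])
  have f2: "finite ({c::'a list. length c = p} \<times> (Desc m p n \<rho> :: 'a item list set))"
    by (rule finite_cartesian_product[OF finite_len_lists finite_Desc])
  have finPP: "finite ?PP"
  proof (cases "\<rho> = 0")
    case True then show ?thesis by (subst if_P[OF True]) (rule finite.emptyI)
  next
    case False then show ?thesis by (subst if_not_P[OF False]) (rule finite_imageI[OF f1])
  qed
  have finDD: "finite ?DD" by (rule finite_imageI[OF f2])
  note fin = finPP finDD
  have "card (Desc m p (Suc n) \<rho> :: 'a item list set) \<le> card (?PP \<union> ?DD)"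
    by (rule card_mono[OF _ Desc_Suc]) (rule finite_UnI[OF finPP finDD])
  also have "\<dots> \<le> card ?PP + card ?DD" by (rule card_Un_le)
  finally have c1: "real (card (Desc m p (Suc n) \<rho> :: 'a item list set)) \<le> real (card ?PP) + real (card ?DD)"
    by linarith
  have cDD: "real (card ?DD) \<le> Q ^ p * real (card (Desc m p n \<rho> :: 'a item list set))"
  proof -
    have "card ?DD \<le> card ({c::'a list. length c = p} \<times> (Desc m p n \<rho> :: 'a item list set))"
      by (rule card_image_le[OF f2])
    also have "\<dots> = CARD('a) ^ p * card (Desc m p n \<rho> :: 'a item list set)"
      by (simp add: card_cartesian_product card_len_lists)
    finally have "real (card ?DD) \<le> real (CARD('a) ^ p * card (Desc m p n \<rho> :: 'a item list set))"
      by (simp only: of_nat_le_iff)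
    then show ?thesis unfolding Q_def by simp
  qed
  show ?case
  proof (cases \<rho>)
    case 0
    have "real (card (Desc m p n \<rho> :: 'a item list set)) \<le> Q ^ (p * n)"
      using Suc.IH[of 0 p] 0 unfolding Q_def by simp
    then have "Q ^ p * real (card (Desc m p n \<rho> :: 'a item list set)) \<le> Q ^ p * Q ^ (p * n)"
      by (rule mult_left_mono) (use Q1 in auto)
    then have "real (card ?DD) \<le> Q ^ p * Q ^ (p * n)"
      using cDD by linarith
    also have "Q ^ p * Q ^ (p * n) = Q ^ (p * Suc n)"
      by (simp add: power_add)
    finally have DDb: "real (card ?DD) \<le> Q ^ (p * Suc n)" .
    have PP0: "card ?PP = 0" using 0 by simp
    have rhs: "Kc (real CARD('a)) \<rho> * real CARD('a) ^ (m*\<rho> + \<rho>*(Suc n-\<rho>) + p*(Suc n-\<rho>)) = Q ^ (p * Suc n)"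
      using 0 by (simp add: Q_def)
    show ?thesis unfolding rhs using c1 DDb PP0 by linarith
  next
    case (Suc r)
    have rn: "r \<le> n" using Suc Suc.prems by simp
    define d where "d = n - r"
    have a: "real (card ?PP) \<le> Q ^ m * (Kc Q r * Q ^ (m*r + r*d + Suc p*d))"
    proof -
      have "card ?PP \<le> card ({v::'a list. length v = m} \<times> (Desc m (Suc p) n r :: 'a item list set))"
        using Suc card_image_le[OF f1, of "\<lambda>(v,ds). Piv v # ds"] by simp
      also have "\<dots> = CARD('a) ^ m * card (Desc m (Suc p) n r :: 'a item list set)"
        by (simp add: card_cartesian_product card_len_lists)
      finally have "real (card ?PP) \<le> real (CARD('a) ^ m * card (Desc m (Suc p) n r :: 'a item list set))"
        by (simp only: of_nat_le_iff)
      then have "real (card ?PP) \<le> Q ^ m * real (card (Desc m (Suc p) n r :: 'a item list set))"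
        unfolding Q_def by simp
      also have "\<dots> \<le> Q ^ m * (Kc Q r * Q ^ (m*r + r*d + Suc p*d))"
        by (rule mult_left_mono) (use Suc.IH[of r "Suc p"] rn Q1 in \<open>simp_all add: Q_def d_def\<close>)
      finally show ?thesis .
    qed
    have b: "real (card ?DD) * Q ^ Suc r \<le> Kc Q (Suc r) * Q ^ (m * Suc r + Suc r * d + p * d)"
    proof (cases "Suc r \<le> n")
      case True
      define d' where "d' = n - Suc r"
      have dd: "d = Suc d'" unfolding d_def d'_def using True by simp
      have c: "real (card (Desc m p n (Suc r) :: 'a item list set)) \<le> Kc Q (Suc r) * Q ^ (m * Suc r + Suc r * d' + p * d')"
        using Suc.IH[of "Suc r" p] True unfolding Q_def d'_def by simp
      show ?thesis unfolding dd
        by (rule step_Dep[OF Q1 c]) (use cDD Suc in simp)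
    next
      case False
      then have "n < \<rho>" using Suc by simp
      then have "(Desc m p n \<rho> :: 'a item list set) = {}" by (rule Desc_empty)
      then have "card ?DD = 0" by simp
      moreover have "0 \<le> Kc Q (Suc r) * Q ^ (m * Suc r + Suc r * d + p * d)"
        using Kc_pos[OF Q1, of "Suc r"] Q1 by (intro mult_nonneg_nonneg) (simp_all del: Kc.simps)
      ultimately show ?thesis by (simp del: Kc.simps)
    qed
    have "real (card ?PP) + real (card ?DD) \<le> Kc Q (Suc r) * Q ^ (m * Suc r + Suc r * d + p * d)"
      by (rule step_comb[OF Q1 step_Piv[OF Q1 a] b])
    moreover have "Kc (real CARD('a)) \<rho> * real CARD('a) ^ (m*\<rho> + \<rho>*(Suc n-\<rho>) + p*(Suc n-\<rho>)) = Kc Q (Suc r) * Q ^ (m * Suc r + Suc r * d + p * d)"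
      unfolding Q_def d_def Suc by simp
    ultimately show ?thesis using c1 by linarith
  qed
qed

lemma alg4:
  fixes x y :: real
  assumes "0 \<le> x" "x \<le> 1/2" "0 \<le> y" "y \<le> 1/2"
  shows "1/4 + x*y/2 \<le> (1/4 + x/2)*(1 - x*y)"
proof -
  have xy: "x*y \<le> 1/4" using mult_mono[of x "1/2" y "1/2"] assms by simp
  have "0 \<le> x*(1/2 - 3*y/4 - x*y/2)" using assms xy by (intro mult_nonneg_nonneg) auto
  moreover have "(1/4 + x/2)*(1 - x*y) - (1/4 + x*y/2) = x*(1/2 - 3*y/4 - x*y/2)"
    by (simp add: field_simps)
  ultimately show ?thesis by linarith
qed

lemma Kc_le4_aux:
  assumes q2: "q \<ge> 2"
  shows "Kc q (Suc r) * (1/4 + 1/(2 * q ^ Suc r)) \<le> 1"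
proof (induction r)
  case 0
  have "1 - 1/q > 0" using q2 by (simp add: field_simps)
  moreover have "1/4 + 1/(2*q) \<le> 1 - 1/q" using q2 by (simp add: field_simps)
  ultimately show ?case by (simp add: field_simps)
next
  case (Suc r)
  define x where "x = 1 / q ^ Suc r"
  define y where "y = 1 / q"
  have qpos: "q > 0" using q2 by simp
  have x0: "0 \<le> x" unfolding x_def using qpos by simp
  have "q ^ Suc r \<ge> 2" using q2 by (metis dual_order.trans le_less_trans one_le_numeral power_increasing less_imp_le numeral_le_one_iff power_one_right Suc_le_mono le0 self_le_power order.refl zero_less_Suc)
  then have x2: "x \<le> 1/2" unfolding x_def by (simp add: field_simps)
  have y0: "0 \<le> y" "y \<le> 1/2" unfolding y_def using q2 by (simp_all add: field_simps)
  have xy: "x * y = 1 / q ^ Suc (Suc r)" unfolding x_def y_def by simp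
  have xyl: "x * y < 1" using x2 y0 mult_mono[of x "1/2" y "1/2"] x0 by simp
  have K: "Kc q (Suc (Suc r)) = Kc q (Suc r) / (1 - x*y)" by (simp add: xy del: Kc.simps) simp
  have A: "1/4 + x*y/2 \<le> (1/4 + x/2)*(1 - x*y)" by (rule alg4[OF x0 x2 y0])
  have IH: "Kc q (Suc r) * (1/4 + x/2) \<le> 1" using Suc.IH unfolding x_def by (simp add: field_simps del: Kc.simps)
  have Kp: "Kc q (Suc r) \<ge> 0" using Kc_pos[of q "Suc r"] q2 by (simp del: Kc.simps)
  have "Kc q (Suc (Suc r)) * (1/4 + x*y/2) = Kc q (Suc r) * ((1/4 + x*y/2) / (1 - x*y))"
    unfolding K by (simp del: Kc.simps)
  also have "\<dots> \<le> Kc q (Suc r) * (1/4 + x/2)"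
    by (rule mult_left_mono[OF _ Kp]) (use A xyl in \<open>simp add: divide_le_eq\<close>)
  also have "\<dots> \<le> 1" by (rule IH)
  finally have "Kc q (Suc (Suc r)) * (1/4 + x*y/2) \<le> 1" .
  then show ?case unfolding xy by (simp add: field_simps del: Kc.simps)
qed

lemma Kc_le4: "q \<ge> 2 \<Longrightarrow> Kc q r \<le> 4"
proof (cases r)
  case 0 then show ?thesis by simp
next
  case (Suc r')
  assume q2: "q \<ge> 2"
  have K: "Kc q r * (1/4 + 1/(2 * q ^ r)) \<le> 1" using Kc_le4_aux[OF q2, of r'] Suc by simp
  have Kp: "Kc q r > 0" using Kc_pos[of q r] q2 by simp
  have "Kc q r * (1/4) \<le> Kc q r * (1/4 + 1/(2 * q ^ r))"
    using Kp q2 by (intro mult_left_mono) auto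
  then show ?thesis using K by linarith
qed

lemma geo_sum:
  fixes Q :: real
  assumes Q2: "Q \<ge> 2"
  shows "s < m \<Longrightarrow> s < n \<Longrightarrow> (\<Sum>\<rho>\<le>s. Q ^ (m*\<rho> + \<rho>*(n-\<rho>))) \<le> 8/7 * Q ^ (m* s + s*(n-s))"
proof (induction s)
  case 0 then show ?case by simp
next
  case (Suc s)
  have IH: "(\<Sum>\<rho>\<le>s. Q ^ (m*\<rho> + \<rho>*(n-\<rho>))) \<le> 8/7 * Q ^ (m* s + s*(n-s))" using Suc by simp
  obtain e where e: "m*Suc s + Suc s*(n - Suc s) = (m* s + s*(n-s)) + 3 + e"
  proof -
    obtain a where a: "n = s + 2 + a" using Suc.prems by (metis add_2_eq_Suc' le_add_diff_inverse Suc_leI)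
    obtain b where b: "m = s + 2 + b" using Suc.prems by (metis add_2_eq_Suc' le_add_diff_inverse Suc_leI)
    have "m*Suc s + Suc s*(n - Suc s) = (m* s + s*(n-s)) + 3 + (a + b)"
      unfolding a b by (simp add: algebra_simps)
    then show ?thesis by (rule that)
  qed
  have "8 * Q ^ (m* s + s*(n-s)) \<le> Q ^ (m*Suc s + Suc s*(n - Suc s))"
  proof -
    have "(8::real) \<le> Q ^ 3" using power_mono[OF Q2, of 3] by simp
    also have "\<dots> \<le> Q ^ (3 + e)" using Q2 by (intro power_increasing) auto
    finally have "8 * Q ^ (m* s + s*(n-s)) \<le> Q ^ (3 + e) * Q ^ (m* s + s*(n-s))"
      using Q2 by (intro mult_right_mono) auto
    also have "\<dots> = Q ^ (m*Suc s + Suc s*(n - Suc s))" unfolding e by (simp add: power_add)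
    finally show ?thesis .
  qed
  then show ?case using IH by simp
qed

fun lc :: "nat \<Rightarrow> 'a::comm_ring_1 list \<Rightarrow> 'a vec list \<Rightarrow> 'a vec" where
  "lc m (c # cs) (p # ps) = c \<cdot>\<^sub>v p + lc m cs ps"
| "lc m _ _ = 0\<^sub>v m"

fun decode :: "nat \<Rightarrow> 'a::comm_ring_1 vec list \<Rightarrow> 'a item list \<Rightarrow> 'a vec list" where
  "decode m ps [] = []"
| "decode m ps (Piv v # ds) = vec_of_list v # decode m (ps @ [vec_of_list v]) ds"
| "decode m ps (Dep c # ds) = lc m c ps # decode m ps ds"

definition vspan :: "nat \<Rightarrow> 'a::field vec set \<Rightarrow> 'a vec set" where
  "vspan m S = LinearCombinations.module.span class_ring (module_vec TYPE('a) m) S"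

fun encode :: "nat \<Rightarrow> 'a::field vec list \<Rightarrow> 'a vec list \<Rightarrow> 'a item list" where
  "encode m ps [] = []"
| "encode m ps (x # xs) = (if x \<in> vspan m (set ps)
      then Dep (SOME c. length c = length ps \<and> lc m c ps = x) # encode m ps xs
      else Piv (list_of_vec x) # encode m (ps @ [x]) xs)"

context vec_space
begin

lemma vspan_eq: "vspan n S = span S"
  by (simp add: vspan_def)

lemma lincomb_list_lc:
  "set ps \<subseteq> carrier_vec n \<Longrightarrow> lincomb_list f ps = lc n (map f [0..<length ps]) ps"
proof (induction ps arbitrary: f)
  case Nil
  then show ?case by simp
next
  case (Cons p ps)
  have "map f [0..<length (p # ps)] = f 0 # map (f \<circ> Suc) [0..<length ps]"
    by (simp add: map_upt_Suc del: upt_Suc)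
  then show ?case using Cons by simp
qed

lemma span_lc:
  assumes "set ps \<subseteq> carrier_vec n" "x \<in> span (set ps)"
  shows "\<exists>c. length c = length ps \<and> lc n c ps = x"
proof -
  have "x \<in> span_list ps" using assms span_list_as_span by simp
  then obtain f where "x = lincomb_list f ps" by (auto elim: in_span_listE)
  then have "x = lc n (map f [0..<length ps]) ps" using lincomb_list_lc assms by simp
  then show ?thesis by (intro exI[of _ "map f [0..<length ps]"]) simp
qed

lemma encode_props:
  assumes "set ps \<subseteq> carrier_vec n" "set xs \<subseteq> carrier_vec n" "distinct ps" "lin_indpt (set ps)"
  shows "decode n ps (encode n ps xs) = xs \<and> wfd n (length ps) (encode n ps xs)
    \<and> length (encode n ps xs) = length xs
    \<and> (\<exists>U. U \<subseteq> set ps \<union> set xs \<and> lin_indpt U \<and> card U = length ps + npiv (encode n ps xs))"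
  using assms
proof (induction xs arbitrary: ps)
  case Nil
  then show ?case using distinct_card by (intro conjI exI[of _ "set ps"]) auto
next
  case (Cons x xs)
  have x: "x \<in> carrier_vec n" and xs: "set xs \<subseteq> carrier_vec n" using Cons.prems by auto
  show ?case
  proof (cases "x \<in> span (set ps)")
    case True
    define c where "c = (SOME c. length c = length ps \<and> lc n c ps = x)"
    have c: "length c = length ps \<and> lc n c ps = x"
      unfolding c_def by (rule someI_ex[OF span_lc[OF Cons.prems(1) True]])
    have enc: "encode n ps (x # xs) = Dep c # encode n ps xs"
      using True unfolding c_def by (simp add: vspan_eq)
    have IH: "decode n ps (encode n ps xs) = xs \<and> wfd n (length ps) (encode n ps xs)
      \<and> length (encode n ps xs) = length xs
      \<and> (\<exists>U. U \<subseteq> set ps \<union> set xs \<and> lin_indpt U \<and> card U = length ps + npiv (encode n ps xs))"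
      using Cons.IH[OF Cons.prems(1) xs Cons.prems(3) Cons.prems(4)] .
    then obtain U where U: "U \<subseteq> set ps \<union> set xs" "lin_indpt U" "card U = length ps + npiv (encode n ps xs)"
      by blast
    show ?thesis unfolding enc using IH c U
      by (intro conjI exI[of _ U]) auto
  next
    case False
    have xnp: "x \<notin> set ps" using False in_own_span[OF Cons.prems(1)] by blast
    have li: "lin_indpt (set (ps @ [x]))"
      using lin_dep_iff_in_span[OF Cons.prems(1) Cons.prems(4) x xnp] False by simp
    have enc: "encode n ps (x # xs) = Piv (list_of_vec x) # encode n (ps @ [x]) xs"
      using False by (simp add: vspan_eq)
    have p1: "set (ps @ [x]) \<subseteq> carrier_vec n" using Cons.prems x by simp
    have p3: "distinct (ps @ [x])" using Cons.prems xnp by simp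
    have IH: "decode n (ps @ [x]) (encode n (ps @ [x]) xs) = xs \<and> wfd n (length (ps @ [x])) (encode n (ps @ [x]) xs)
      \<and> length (encode n (ps @ [x]) xs) = length xs
      \<and> (\<exists>U. U \<subseteq> set (ps @ [x]) \<union> set xs \<and> lin_indpt U \<and> card U = length (ps @ [x]) + npiv (encode n (ps @ [x]) xs))"
      using Cons.IH[OF p1 xs p3 li] .
    then obtain U where U: "U \<subseteq> set (ps @ [x]) \<union> set xs" "lin_indpt U" "card U = length (ps @ [x]) + npiv (encode n (ps @ [x]) xs)"
      by blast
    have dx: "dim_vec x = n" using x by simp
    show ?thesis unfolding enc using IH U dx
      by (intro conjI exI[of _ U]) (auto simp: vec_list)
  qed
qed

end


lemma (in vec_space) lin_indpt_empty: "lin_indpt {}"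
  unfolding lin_dep_def by auto

lemma bad_card:
  fixes m n N :: nat
  assumes q2: "CARD('a::{finite,field}) \<ge> 2" and N1: "1 \<le> N" and Nm: "N \<le> m" and Nn: "N \<le> n"
  shows "real (card {M :: 'a mat. M \<in> carrier_mat m n \<and> mat_rank M < N})
     \<le> 32/7 * real CARD('a) ^ (m*(N-1) + (N-1)*(n-(N-1)))"
proof -
  define s where "s = N - 1"
  define F where "F = (\<lambda>ds. mat_of_cols m (decode m [] ds :: 'a vec list))"
  define Q where "Q = real CARD('a)"
  have Q2: "Q \<ge> 2" using q2 unfolding Q_def by simp
  have sm: "s < m" "s < n" using N1 Nm Nn unfolding s_def by auto
  have sub: "{M :: 'a mat. M \<in> carrier_mat m n \<and> mat_rank M < N} \<subseteq> (\<Union>\<rho>\<in>{..s}. F ` (Desc m 0 n \<rho> :: 'a item list set))"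
  proof
    fix M :: "'a mat" assume "M \<in> {M. M \<in> carrier_mat m n \<and> mat_rank M < N}"
    then have M: "M \<in> carrier_mat m n" and rk: "mat_rank M < N" by auto
    interpret vec_space "TYPE('a)" m .
    define ds where "ds = encode m [] (cols M)"
    have cm: "set (cols M) \<subseteq> carrier_vec m" using M cols_dim by (metis carrier_matD(1))
    have P: "decode m [] ds = cols M \<and> wfd m 0 ds \<and> length ds = length (cols M)
       \<and> (\<exists>U. U \<subseteq> set [] \<union> set (cols M) \<and> lin_indpt U \<and> card U = length [] + npiv ds)"
      unfolding ds_def using encode_props[of "[]" "cols M"] cm lin_indpt_empty by simp
    then obtain U where U: "U \<subseteq> set (cols M)" "lin_indpt U" "card U = npiv ds" by auto
    have "card U \<le> rank M" by (rule rank_ge_card_indpt[OF M U(1) U(2)])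
    moreover have "mat_rank M = rank M" unfolding mat_rank_def using M by simp
    ultimately have np: "npiv ds \<le> s" using rk U(3) unfolding s_def by linarith
    have "ds \<in> Desc m 0 n (npiv ds)" unfolding Desc_def using P M by simp
    moreover have "F ds = M" unfolding F_def using P M by (metis carrier_matD(1) mat_of_cols_cols)
    ultimately show "M \<in> (\<Union>\<rho>\<in>{..s}. F ` (Desc m 0 n \<rho> :: 'a item list set))"
      using np by blast
  qed
  have "card {M :: 'a mat. M \<in> carrier_mat m n \<and> mat_rank M < N} \<le> card (\<Union>\<rho>\<in>{..s}. F ` (Desc m 0 n \<rho> :: 'a item list set))"
    by (rule card_mono[OF _ sub]) (auto intro: finite_Desc)
  also have "\<dots> \<le> (\<Sum>\<rho>\<in>{..s}. card (F ` (Desc m 0 n \<rho> :: 'a item list set)))"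
    by (rule card_UN_le) simp
  also have "\<dots> \<le> (\<Sum>\<rho>\<in>{..s}. card (Desc m 0 n \<rho> :: 'a item list set))"
    by (intro sum_mono card_image_le finite_Desc)
  finally have c1: "real (card {M :: 'a mat. M \<in> carrier_mat m n \<and> mat_rank M < N}) \<le> (\<Sum>\<rho>\<in>{..s}. real (card (Desc m 0 n \<rho> :: 'a item list set)))"
    by (metis of_nat_le_iff of_nat_sum)
  also have "\<dots> \<le> (\<Sum>\<rho>\<in>{..s}. 4 * Q ^ (m*\<rho> + \<rho>*(n-\<rho>)))"
  proof (rule sum_mono)
    fix \<rho> assume "\<rho> \<in> {..s}"
    then have rn: "\<rho> \<le> n" using sm by simp
    have "real (card (Desc m 0 n \<rho> :: 'a item list set)) \<le> Kc Q \<rho> * Q ^ (m*\<rho> + \<rho>*(n-\<rho>))"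
      using Desc_card[OF q2 rn, of m 0] unfolding Q_def by simp
    also have "\<dots> \<le> 4 * Q ^ (m*\<rho> + \<rho>*(n-\<rho>))"
      using Kc_le4[OF Q2, of \<rho>] Q2 by (intro mult_right_mono) (simp_all del: Kc.simps)
    finally show "real (card (Desc m 0 n \<rho> :: 'a item list set)) \<le> 4 * Q ^ (m*\<rho> + \<rho>*(n-\<rho>))" .
  qed
  also have "\<dots> = 4 * (\<Sum>\<rho>\<le>s. Q ^ (m*\<rho> + \<rho>*(n-\<rho>)))"
    by (simp add: sum_distrib_left)
  also have "\<dots> \<le> 4 * (8/7 * Q ^ (m* s + s*(n-s)))"
    using geo_sum[OF Q2 sm] by simp
  finally show ?thesis unfolding s_def Q_def by simp
qed


lemma card_carrier_mat: "card (carrier_mat a b :: 'a::finite mat set) = CARD('a) ^ (a * b)"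
  and finite_carrier_mat: "finite (carrier_mat a b :: 'a::finite mat set)"
proof -
  let ?P = "PiE ({..<a} \<times> {..<b}) (\<lambda>_. UNIV :: 'a set)"
  let ?f = "\<lambda>g. mat a b g :: 'a mat"
  have eq: "carrier_mat a b = ?f ` ?P"
  proof
    show "carrier_mat a b \<subseteq> ?f ` ?P"
    proof
      fix M :: "'a mat" assume M: "M \<in> carrier_mat a b"
      let ?g = "restrict (\<lambda>ij. M $$ ij) ({..<a} \<times> {..<b})"
      have "?g \<in> ?P" by simp
      moreover have "M = ?f ?g" using M by (intro eq_matI) auto
      ultimately show "M \<in> ?f ` ?P" by blast
    qed
  qed auto
  have inj: "inj_on ?f ?P"
  proof (rule inj_onI)
    fix g g' assume g: "g \<in> ?P" and g': "g' \<in> ?P" and e: "?f g = ?f g'"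
    show "g = g'"
    proof (rule PiE_ext[OF g g'])
      fix ij assume ij: "ij \<in> {..<a} \<times> {..<b}"
      then obtain i j where "ij = (i, j)" "i < a" "j < b" by auto
      then have "?f g $$ (i,j) = g ij" "?f g' $$ (i,j) = g' ij" by auto
      then show "g ij = g' ij" using e by simp
    qed
  qed
  have fP: "finite ?P" by (intro finite_PiE) auto
  have "card (carrier_mat a b :: 'a mat set) = card ?P" unfolding eq by (rule card_image[OF inj])
  also have "\<dots> = CARD('a) ^ (a * b)" by (simp add: card_PiE card_cartesian_product)
  finally show "card (carrier_mat a b :: 'a::finite mat set) = CARD('a) ^ (a * b)" .
  show "finite (carrier_mat a b :: 'a::finite mat set)" unfolding eq using fP by simp
qed

lemma card_PiE_restrict:
  assumes "finite D" "D \<inter> S = {}" "finite S"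
  shows "card {A \<in> PiE (S \<union> D) (\<lambda>_. X). P (restrict A S)}
       = card {B \<in> PiE S (\<lambda>_. X). P B} * card X ^ card D"
  using assms
proof (induction D rule: finite_induct)
  case empty
  have "{A \<in> PiE S (\<lambda>_. X). P (restrict A S)} = {B \<in> PiE S (\<lambda>_. X). P B}"
    by auto
  then show ?case by (simp only: Un_empty_right card.empty power_0 mult_1_right)
next
  case (insert d D)
  have dS: "d \<notin> S" using insert.prems by auto
  have DS: "D \<inter> S = {}" using insert.prems by auto
  let ?G = "{g \<in> PiE (S \<union> D) (\<lambda>_. X). P (restrict g S)}"
  let ?h = "\<lambda>(y, g). g(d := y)"
  have eq: "{A \<in> PiE (S \<union> insert d D) (\<lambda>_. X). P (restrict A S)} = ?h ` (X \<times> ?G)"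
  proof -
    have "S \<union> insert d D = insert d (S \<union> D)" by auto
    then have PE: "PiE (S \<union> insert d D) (\<lambda>_. X) = ?h ` (X \<times> PiE (S \<union> D) (\<lambda>_. X))"
      using PiE_insert_eq by simp
    have rs: "\<And>g y. restrict (g(d := y)) S = restrict g S"
      using dS by (auto simp: restrict_def)
    show ?thesis unfolding PE by (auto simp: image_iff rs)
  qed
  have inj: "inj_on ?h (X \<times> ?G)"
  proof (rule inj_onI)
    fix p p' assume p: "p \<in> X \<times> ?G" and p': "p' \<in> X \<times> ?G" and e: "?h p = ?h p'"
    obtain y g where pp: "p = (y, g)" by (cases p)
    obtain y' g' where pp': "p' = (y', g')" by (cases p')
    have g: "g \<in> PiE (S \<union> D) (\<lambda>_. X)" and g': "g' \<in> PiE (S \<union> D) (\<lambda>_. X)" using p p' pp pp' by auto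
    have e': "g(d := y) = g'(d := y')" using e pp pp' by simp
    have "y = y'" using fun_cong[OF e', of d] by simp
    moreover have "g = g'"
    proof
      fix i show "g i = g' i"
      proof (cases "i = d")
        case True
        have dd: "d \<notin> S \<union> D" using dS insert.hyps by auto
        show ?thesis using PiE_arb[OF g dd] PiE_arb[OF g' dd] True by simp
      next
        case False then show ?thesis using fun_cong[OF e', of i] by simp
      qed
    qed
    ultimately show "p = p'" using pp pp' by simp
  qed
  have "card {A \<in> PiE (S \<union> insert d D) (\<lambda>_. X). P (restrict A S)} = card (X \<times> ?G)"
    unfolding eq by (rule card_image[OF inj])
  also have "\<dots> = card X * card ?G" by (rule card_cartesian_product)
  also have "card ?G = card {B \<in> PiE S (\<lambda>_. X). P B} * card X ^ card D"
    by (rule insert.IH[OF DS insert.prems(2)])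
  finally show ?case using insert.hyps by simp
qed

lemma stack_mat_cong:
  assumes "set l \<subseteq> S"
  shows "stack_mat k n A l = stack_mat k n (restrict A S) l"
  unfolding stack_mat_def
proof (intro eq_matI)
  fix i j assume "i < dim_row (mat (length l * k) n (\<lambda>(i, j). restrict A S (l ! (i div k)) $$ (i mod k, j)))"
    "j < dim_col (mat (length l * k) n (\<lambda>(i, j). restrict A S (l ! (i div k)) $$ (i mod k, j)))"
  then have ij: "i < length l * k" "j < n" by auto
  then have "i div k < length l" by (simp add: less_mult_imp_div_less)
  then have "l ! (i div k) \<in> S" using assms nth_mem by blast
  then show "mat (length l * k) n (\<lambda>(i, j). A (l ! (i div k)) $$ (i mod k, j)) $$ (i, j) =
         mat (length l * k) n (\<lambda>(i, j). restrict A S (l ! (i div k)) $$ (i mod k, j)) $$ (i, j)"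
    using ij by simp
qed auto

lemma stack_inj:
  assumes k: "k > 0" and fS: "finite S"
  shows "inj_on (\<lambda>B. stack_mat k n B (sorted_list_of_set S)) (PiE S (\<lambda>_. carrier_mat k n))"
proof (rule inj_onI)
  fix B B' assume B: "B \<in> PiE S (\<lambda>_. carrier_mat k n)" and B': "B' \<in> PiE S (\<lambda>_. carrier_mat k n)"
    and e: "stack_mat k n B (sorted_list_of_set S) = stack_mat k n B' (sorted_list_of_set S)"
  let ?l = "sorted_list_of_set S"
  show "B = B'"
  proof (rule PiE_ext[OF B B'])
    fix i assume iS: "i \<in> S"
    then obtain p where p: "p < length ?l" "?l ! p = i" using fS by (metis in_set_conv_nth set_sorted_list_of_set)
    have Bi: "B i \<in> carrier_mat k n" "B' i \<in> carrier_mat k n" using B B' iS by auto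
    show "B i = B' i"
    proof (rule eq_matI)
      fix a b assume a: "a < dim_row (B' i)" and b: "b < dim_col (B' i)"
      then have ab: "a < k" "b < n" using Bi by auto
      have lt: "p * k + a < length ?l * k"
      proof -
        have "p * k + a < p * k + k" using ab by simp
        also have "\<dots> = Suc p * k" by simp
        also have "\<dots> \<le> length ?l * k" using p(1) by (intro mult_right_mono) auto
        finally show ?thesis .
      qed
      have dv: "(p * k + a) div k = p" "(p * k + a) mod k = a" using ab k by auto
      have "stack_mat k n B ?l $$ (p * k + a, b) = B i $$ (a, b)"
        unfolding stack_mat_def using lt ab dv p by simp
      moreover have "stack_mat k n B' ?l $$ (p * k + a, b) = B' i $$ (a, b)"
        unfolding stack_mat_def using lt ab dv p by simp
      ultimately show "B i $$ (a, b) = B' i $$ (a, b)" using e by simp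
    qed (use Bi in auto)
  qed
qed

lemma stack_carrier: "stack_mat k n B l \<in> carrier_mat (length l * k) n"
  unfolding stack_mat_def by simp

lemma avg_exists:
  fixes T :: "'x set" and Ss :: "'s set" and bad :: "'x \<Rightarrow> 's \<Rightarrow> bool"
  assumes fT: "finite T" and ne: "T \<noteq> {}" and fS: "finite Ss"
    and B: "\<And>S. S \<in> Ss \<Longrightarrow> real (card {A \<in> T. bad A S}) \<le> B"
  shows "\<exists>A \<in> T. real (card {S \<in> Ss. bad A S}) \<le> real (card Ss) * B / real (card T)"
proof (rule ccontr)
  assume "\<not> ?thesis"
  then have gt: "\<And>A. A \<in> T \<Longrightarrow> real (card {S \<in> Ss. bad A S}) > real (card Ss) * B / real (card T)"
    by force
  have cT: "real (card T) > 0" using fT ne by (simp add: card_gt_0_iff)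
  have cnt1: "\<And>A. real (card {S \<in> Ss. bad A S}) = (\<Sum>S\<in>Ss. if bad A S then 1 else 0)"
    using fS by (simp add: sum.inter_filter[symmetric])
  have cnt2: "\<And>S. real (card {A \<in> T. bad A S}) = (\<Sum>A\<in>T. if bad A S then 1 else 0)"
    using fT by (simp add: sum.inter_filter[symmetric])
  have "(\<Sum>A\<in>T. real (card {S \<in> Ss. bad A S})) = (\<Sum>S\<in>Ss. real (card {A \<in> T. bad A S}))"
    unfolding cnt1 cnt2 by (rule sum.swap)
  also have "\<dots> \<le> (\<Sum>S\<in>Ss. B)" by (rule sum_mono) (rule B)
  also have "\<dots> = real (card Ss) * B" by simp
  finally have le: "(\<Sum>A\<in>T. real (card {S \<in> Ss. bad A S})) \<le> real (card Ss) * B" .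
  have "(\<Sum>A\<in>T. real (card Ss) * B / real (card T)) < (\<Sum>A\<in>T. real (card {S \<in> Ss. bad A S}))"
    by (rule sum_strict_mono[OF fT ne]) (rule gt)
  moreover have "(\<Sum>A\<in>T. real (card Ss) * B / real (card T)) = real (card Ss) * B"
    using cT by simp
  ultimately show False using le by linarith
qed

lemma sorted_image_mono:
  assumes "strict_mono_on S g" "finite S"
  shows "sorted_list_of_set (g ` S) = map g (sorted_list_of_set S)"
proof -
  have inj: "inj_on g S" using assms(1) strict_mono_on_imp_inj_on by blast
  have sw: "sorted_wrt (<) (map g (sorted_list_of_set S))"
  proof -
    have "sorted_wrt (<) (sorted_list_of_set S)" by (rule strict_sorted_list_of_set)
    then show ?thesis unfolding sorted_wrt_map
    proof (rule sorted_wrt_mono_rel[rotated])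
      fix x y assume "x \<in> set (sorted_list_of_set S)" "y \<in> set (sorted_list_of_set S)" "x < y"
      then show "g x < g y" using assms by (auto simp: strict_mono_on_def)
    qed
  qed
  show ?thesis
    using sorted_list_of_set_unique[of "g ` S" "map g (sorted_list_of_set S)"] assms(2) sw inj
    by (simp add: card_image)
qed

lemma stack_map: "stack_mat k n (\<lambda>i. A (g i)) l = stack_mat k n A (map g l)"
  unfolding stack_mat_def by (intro eq_matI) (auto simp: less_mult_imp_div_less)


lemma choose_fact_le: "(n choose k) * fact k \<le> n ^ k"
proof (cases "k \<le> n")
  case True
  have e: "fact k * fact (n - k) * (n choose k) = (fact n :: nat)" by (rule binomial_fact_lemma[OF True])
  have "(n choose k) * fact k = fact n div fact (n - k)"
    using e[symmetric] by (simp add: mult.commute mult.left_commute)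
  also have "\<dots> \<le> n ^ k" by (rule fact_div_fact_le_pow[OF True])
  finally show ?thesis .
next
  case False then show ?thesis by (simp add: binomial_eq_0 not_le)
qed

lemma choose_real_le: "real (n choose k) \<le> real n ^ k / fact k"
proof -
  have "real ((n choose k) * fact k) \<le> real (n ^ k)" using choose_fact_le by (simp only: of_nat_le_iff)
  then have "real (n choose k) * fact k \<le> real n ^ k" by simp
  then show ?thesis by (simp add: field_simps)
qed

lemma final_ineq:
  fixes \<alpha> r :: nat and Qf :: real
  assumes a2: "\<alpha> \<ge> 2" and ra: "r \<ge> \<alpha>" and Qf: "Qf > 0"
    and H: "real r ^ (\<alpha> - 1) * (2 * exp 1 * 3.48 * real \<alpha>) \<le> fact (\<alpha> - 1) * Qf"
  shows "real ((r + (r + \<alpha> - 1) div \<alpha>) choose \<alpha>) * (32/7) / Qf \<le> real ((r + \<alpha> - 1) div \<alpha>)"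
proof -
  define d where "d = (r + \<alpha> - 1) div \<alpha>"
  define R where "R = r + d"
  define e where "e = exp (1::real)"
  have e0: "e > 0" and e1: "e < 2.72" unfolding e_def using e_less_272 by auto
  have apos: "real \<alpha> > 0" using a2 by simp
  have dm: "d * \<alpha> + (r + \<alpha> - 1) mod \<alpha> = r + \<alpha> - 1" unfolding d_def by (rule div_mult_mod_eq)
  have md: "(r + \<alpha> - 1) mod \<alpha> < \<alpha>" using a2 by simp
  have d1: "r \<le> d * \<alpha>" using dm md by linarith
  have d2: "d * \<alpha> \<le> 2 * r" using dm ra by linarith
  have d1r: "real r / real \<alpha> \<le> real d"
    using d1 apos by (simp add: field_simps) (metis of_nat_le_iff of_nat_mult mult.commute)
  have Rle: "real R \<le> real r * (1 + 2 / real \<alpha>)"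
  proof -
    have "real d * real \<alpha> \<le> 2 * real r" using d2 by (metis of_nat_le_iff of_nat_mult of_nat_numeral)
    then have "real d \<le> 2 * real r / real \<alpha>" using apos by (simp add: field_simps)
    then show ?thesis unfolding R_def by (simp add: field_simps)
  qed
  have ex: "(1 + 2 / real \<alpha>) ^ \<alpha> \<le> e * e"
  proof -
    have "(1 + 2 / real \<alpha>) ^ \<alpha> \<le> exp (2 / real \<alpha>) ^ \<alpha>"
      by (rule power_mono[OF exp_ge_add_one_self]) (use apos in simp)
    also have "\<dots> = exp (real \<alpha> * (2 / real \<alpha>))" by (rule exp_of_nat_mult[symmetric])
    also have "\<dots> = exp (1 + 1)" using apos by simp
    also have "\<dots> = e * e" unfolding e_def by (rule exp_add)
    finally show ?thesis .
  qed
  have RA: "real R ^ \<alpha> \<le> real r ^ \<alpha> * (e * e)"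
  proof -
    have "real R ^ \<alpha> \<le> (real r * (1 + 2 / real \<alpha>)) ^ \<alpha>" by (rule power_mono[OF Rle]) simp
    also have "\<dots> = real r ^ \<alpha> * (1 + 2 / real \<alpha>) ^ \<alpha>" by (simp add: power_mult_distrib)
    also have "\<dots> \<le> real r ^ \<alpha> * (e * e)" by (rule mult_left_mono[OF ex]) simp
    finally show ?thesis .
  qed
  obtain a' where a': "\<alpha> = Suc a'" using a2 by (cases \<alpha>) auto
  have K: "2 * e * 3.48 * real \<alpha> > 0" using e0 apos by simp
  have H': "real r ^ a' \<le> fact a' * Qf / (2 * e * 3.48 * real \<alpha>)"
    using H K unfolding a' e_def by (simp add: pos_le_divide_eq)
  have ra': "real r ^ \<alpha> = real r * real r ^ a'" unfolding a' by simp
  have fa: "(fact \<alpha> :: real) = real \<alpha> * fact a'" unfolding a' by (simp add: fact_Suc)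
  have fpos: "(fact a' :: real) > 0" by simp
  have "real (R choose \<alpha>) \<le> real R ^ \<alpha> / fact \<alpha>" by (rule choose_real_le)
  also have "\<dots> \<le> real r ^ \<alpha> * (e * e) / fact \<alpha>" by (rule divide_right_mono[OF RA]) simp
  also have "\<dots> = real r * real r ^ a' * (e * e) / (real \<alpha> * fact a')" unfolding ra' fa ..
  also have "\<dots> \<le> real r * (fact a' * Qf / (2 * e * 3.48 * real \<alpha>)) * (e * e) / (real \<alpha> * fact a')"
    using H' e0 apos fpos by (intro divide_right_mono mult_right_mono mult_left_mono) auto
  also have "\<dots> = real r * Qf * e / (6.96 * real \<alpha> * real \<alpha>)"
    using e0 apos fpos by (simp add: field_simps)
  finally have C: "real (R choose \<alpha>) \<le> real r * Qf * e / (6.96 * real \<alpha> * real \<alpha>)" .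
  have "real (R choose \<alpha>) * (32/7) / Qf \<le> real r * Qf * e / (6.96 * real \<alpha> * real \<alpha>) * (32/7) / Qf"
    using C Qf by (intro divide_right_mono mult_right_mono) auto
  also have "\<dots> = real r / real \<alpha> * (e * (32/7) / (6.96 * real \<alpha>))"
    using Qf apos by (simp add: field_simps)
  also have "\<dots> \<le> real r / real \<alpha> * 1"
  proof (rule mult_left_mono)
    have "e * (32/7) \<le> 2.72 * (32/7)" using e1 by simp
    also have "\<dots> \<le> 6.96 * real \<alpha>" using a2 by simp
    finally show "e * (32/7) / (6.96 * real \<alpha>) \<le> 1" using apos by simp
  qed simp
  also have "\<dots> \<le> real d" using d1r by simp
  finally show ?thesis unfolding R_def d_def .
qed


theorem mainTheorem15:
  fixes \<alpha> \<epsilon> l t h r q :: nat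
  assumes "\<alpha> \<ge> 2" and "l \<ge> 1" and "t \<ge> 1"
    and "1 \<le> h" and "h \<le> \<alpha> * l + \<epsilon>"
    and "CARD('a) = q"
    and "real r \<le> ((fact (\<alpha> - 1) / (2 * exp 1 * 3.48 * real \<alpha>)) powr (1 / (real \<alpha> - 1)))
                  * real q powr ((real (\<alpha> * l + \<epsilon> - h) * real \<epsilon> * real t ^ 2
                                 + real (\<alpha> * l + 2 * \<epsilon> - h) * real t + 1) / (real \<alpha> - 1))"
  shows "\<exists>A :: nat \<Rightarrow> ('a::{finite, field}) mat.
           (\<forall>i \<in> {1..r}. A i \<in> carrier_mat (l * t) (h * t)) \<and>
           (\<forall>S. S \<subseteq> {1..r} \<and> card S = \<alpha> \<longrightarrow>
              int (mat_rank (stack_mat (l * t) (h * t) A (sorted_list_of_set S)))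
                \<ge> (int h - int \<epsilon>) * int t)"
proof (cases "h \<le> \<epsilon> \<or> r < \<alpha>")
  case True
  let ?A = "\<lambda>i::nat. 0\<^sub>m (l * t) (h * t) :: 'a mat"
  show ?thesis
  proof (intro exI[of _ ?A] conjI ballI allI impI)
    fix i show "?A i \<in> carrier_mat (l * t) (h * t)" by simp
  next
    fix S :: "nat set" assume S: "S \<subseteq> {1..r} \<and> card S = \<alpha>"
    show "int (mat_rank (stack_mat (l * t) (h * t) ?A (sorted_list_of_set S))) \<ge> (int h - int \<epsilon>) * int t"
    proof (cases "h \<le> \<epsilon>")
      case True
      then have "(int h - int \<epsilon>) * int t \<le> 0" by (simp add: mult_nonpos_nonneg)
      then show ?thesis by linarith
    next
      case False
      then have "r < \<alpha>" using \<open>h \<le> \<epsilon> \<or> r < \<alpha>\<close> by simp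
      moreover have "card S \<le> r" using S card_mono[of "{1..r}" S] by simp
      ultimately show ?thesis using S by simp
    qed
  qed
next
  case False
  then have he: "\<epsilon> < h" and ra: "\<alpha> \<le> r" by auto
  have a2: "\<alpha> \<ge> 2" using assms(1) .
  define k where "k = l * t"
  define n where "n = h * t"
  define N where "N = (h - \<epsilon>) * t"
  define m where "m = \<alpha> * k"
  define s where "s = N - 1"
  define F where "F = (m - s) * (n - s)"
  define Q where "Q = real CARD('a)"
  have q2: "CARD('a) \<ge> 2"
  proof -
    have "card {0::'a, 1} \<le> CARD('a)" by (rule card_mono) auto
    then show ?thesis by simp
  qed
  have Q2: "Q \<ge> 2" unfolding Q_def using q2 by simp
  have k0: "k > 0" unfolding k_def using assms(2,3) by simp
  have N1: "1 \<le> N" unfolding N_def using he assms(3) by simp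
  have Nn: "N \<le> n" unfolding N_def n_def by simp
  have Nm: "N \<le> m"
  proof -
    have "h - \<epsilon> \<le> \<alpha> * l" using assms(5) by simp
    then have "(h - \<epsilon>) * t \<le> \<alpha> * l * t" by simp
    then show ?thesis unfolding N_def m_def k_def by (simp add: mult.assoc)
  qed
  obtain w a where hw: "h = \<epsilon> + w" and aw: "\<alpha> * l = a + w" and w1: "w \<ge> 1"
    by (rule that[of "h - \<epsilon>" "\<alpha> * l + \<epsilon> - h"]) (use assms(5) he in arith)+
  have mn_eq: "m * n = (m * s + s * (n - s)) + F"
  proof -
    obtain u where u: "m = s + u" using Nm N1 unfolding s_def by (metis le_add_diff_inverse diff_le_self le_trans)
    obtain v where v: "n = s + v" using Nn N1 unfolding s_def by (metis le_add_diff_inverse diff_le_self le_trans)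
    show ?thesis unfolding F_def u v by (simp add: algebra_simps)
  qed
  have F_eq: "real (\<alpha> * l + \<epsilon> - h) * real \<epsilon> * real t ^ 2 + real (\<alpha> * l + 2 * \<epsilon> - h) * real t + 1 = real F"
  proof -
    have s_eq: "s = w * t - 1" unfolding s_def N_def hw by simp
    have wt: "w * t \<ge> 1" using w1 assms(3) by simp
    have m_s: "m - s = a * t + 1"
    proof -
      have "m = a * t + w * t" unfolding m_def k_def by (simp add: mult.assoc[symmetric] aw algebra_simps)
      then show ?thesis using s_eq wt by simp
    qed
    have n_s: "n - s = \<epsilon> * t + 1"
    proof -
      have "n = \<epsilon> * t + w * t" unfolding n_def hw by (simp add: algebra_simps)
      then show ?thesis using s_eq wt by simp
    qed
    have e1: "\<alpha> * l + \<epsilon> - h = a" using hw aw by simp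
    have e2: "\<alpha> * l + 2 * \<epsilon> - h = a + \<epsilon>" using hw aw by simp
    show ?thesis unfolding F_def m_s n_s e1 e2 by (simp add: algebra_simps power2_eq_square)
  qed
  define c where "c = fact (\<alpha> - 1) / (2 * exp 1 * 3.48 * real \<alpha>)"
  have c0: "c > 0" unfolding c_def using a2 by simp
  have H: "real r ^ (\<alpha> - 1) * (2 * exp 1 * 3.48 * real \<alpha>) \<le> fact (\<alpha> - 1) * Q ^ F"
  proof -
    have hyp: "real r \<le> c powr (1 / (real \<alpha> - 1)) * Q powr (real F / (real \<alpha> - 1))"
      using assms(7) unfolding c_def Q_def assms(6) F_eq .
    have am: "real (\<alpha> - 1) = real \<alpha> - 1" using a2 by simp
    have am0: "real \<alpha> - 1 > 0" using a2 by simp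
    have "real r ^ (\<alpha> - 1) \<le> (c powr (1 / (real \<alpha> - 1)) * Q powr (real F / (real \<alpha> - 1))) ^ (\<alpha> - 1)"
      by (rule power_mono[OF hyp]) simp
    also have "\<dots> = (c powr (1 / (real \<alpha> - 1))) ^ (\<alpha> - 1) * (Q powr (real F / (real \<alpha> - 1))) ^ (\<alpha> - 1)"
      by (rule power_mult_distrib)
    also have "(c powr (1 / (real \<alpha> - 1))) ^ (\<alpha> - 1) = c"
      using c0 am0 by (simp add: powr_power am)
    also have "(Q powr (real F / (real \<alpha> - 1))) ^ (\<alpha> - 1) = Q ^ F"
      using Q2 am0 by (simp add: powr_power am powr_realpow)
    finally have "real r ^ (\<alpha> - 1) \<le> c * Q ^ F" .
    moreover have "2 * exp 1 * 3.48 * real \<alpha> > 0" using a2 by simp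
    ultimately show ?thesis unfolding c_def by (simp add: field_simps)
  qed
  define d where "d = (r + \<alpha> - 1) div \<alpha>"
  define R where "R = r + d"
  have QF: "Q ^ F > 0" using Q2 by simp
  have fin_ineq: "real (R choose \<alpha>) * (32/7) / Q ^ F \<le> real d"
    unfolding R_def d_def by (rule final_ineq[OF a2 ra QF H])
  define I where "I = {1..R}"
  define X where "X = (carrier_mat k n :: 'a mat set)"
  define T where "T = PiE I (\<lambda>_. X)"
  define Ss where "Ss = {S. S \<subseteq> I \<and> card S = \<alpha>}"
  define bad where "bad = (\<lambda>(A :: nat \<Rightarrow> 'a mat) S. mat_rank (stack_mat k n A (sorted_list_of_set S)) < N)"
  define Bad where "Bad = {M :: 'a mat. M \<in> carrier_mat m n \<and> mat_rank M < N}"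
  have fI: "finite I" unfolding I_def by simp
  have fX: "finite X" unfolding X_def by (rule finite_carrier_mat)
  have cX: "card X = CARD('a) ^ (k * n)" unfolding X_def by (rule card_carrier_mat)
  have fT: "finite T" unfolding T_def using fI fX by (intro finite_PiE) auto
  have cT: "card T = card X ^ R" unfolding T_def I_def by (simp add: card_PiE)
  have neT: "T \<noteq> {}" unfolding T_def X_def by (auto simp: PiE_eq_empty_iff intro: zero_carrier_mat)
  have fSs: "finite Ss" unfolding Ss_def using fI by (auto intro: finite_subset[of _ "Pow I"])
  have cSs: "card Ss = R choose \<alpha>" unfolding Ss_def I_def using n_subsets[of "{1..R}" \<alpha>] by simp
  have fBad: "finite Bad" unfolding Bad_def by (rule finite_subset[OF _ finite_carrier_mat[of m n]]) auto
  have cBad: "real (card Bad) \<le> 32/7 * Q ^ (m * s + s * (n - s))"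
    unfolding Bad_def Q_def s_def by (rule bad_card[OF q2 N1 Nm Nn])
  define B where "B = real (card Bad) * real (card X) ^ (R - \<alpha>)"
  have fiber: "real (card {A \<in> T. bad A S}) \<le> B" if S: "S \<in> Ss" for S
  proof -
    have SI: "S \<subseteq> I" and cS: "card S = \<alpha>" using S unfolding Ss_def by auto
    have fS: "finite S" using SI fI finite_subset by blast
    have U: "S \<union> (I - S) = I" using SI by auto
    have badr: "bad A S = bad (restrict A S) S" for A
    proof -
      have e: "stack_mat k n A (sorted_list_of_set S) = stack_mat k n (restrict A S) (sorted_list_of_set S)"
        by (rule stack_mat_cong) (simp add: fS)
      show ?thesis unfolding bad_def e by (rule refl)
    qed
    have eqT: "{A \<in> T. bad A S} = {A \<in> PiE (S \<union> (I - S)) (\<lambda>_. X). (\<lambda>B. bad B S) (restrict A S)}"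
      unfolding T_def U using badr by simp
    then have "card {A \<in> T. bad A S} = card {B \<in> PiE S (\<lambda>_. X). bad B S} * card X ^ card (I - S)"
    proof -
      have dj: "(I - S) \<inter> S = {}" by blast
      have fD: "finite (I - S)" using fI by simp
      show ?thesis using card_PiE_restrict[OF fD dj fS, of X "\<lambda>B. bad B S"] eqT by simp
    qed
    also have "card (I - S) = R - \<alpha>" using SI fS cS unfolding I_def by (simp add: card_Diff_subset)
    finally have c1: "card {A \<in> T. bad A S} = card {B \<in> PiE S (\<lambda>_. X). bad B S} * card X ^ (R - \<alpha>)" .
    have "card {B \<in> PiE S (\<lambda>_. X). bad B S} \<le> card Bad"
    proof (rule card_inj_on_le[OF _ _ fBad])
      show "inj_on (\<lambda>B. stack_mat k n B (sorted_list_of_set S)) {B \<in> PiE S (\<lambda>_. X). bad B S}"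
        using stack_inj[OF k0 fS, of n] unfolding X_def by (rule inj_on_subset) auto
      show "(\<lambda>B. stack_mat k n B (sorted_list_of_set S)) ` {B \<in> PiE S (\<lambda>_. X). bad B S} \<subseteq> Bad"
      proof
        fix M assume "M \<in> (\<lambda>B. stack_mat k n B (sorted_list_of_set S)) ` {B \<in> PiE S (\<lambda>_. X). bad B S}"
        then obtain B' where B': "bad B' S" "M = stack_mat k n B' (sorted_list_of_set S)" by auto
        have "M \<in> carrier_mat m n"
          using stack_carrier[of k n B' "sorted_list_of_set S"] B'(2) fS cS unfolding m_def
          by (simp add: mult.commute)
        then show "M \<in> Bad" using B' unfolding Bad_def bad_def by simp
      qed
    qed
    then have "real (card {B \<in> PiE S (\<lambda>_. X). bad B S}) * real (card X) ^ (R - \<alpha>) \<le> real (card Bad) * real (card X) ^ (R - \<alpha>)"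
      by (intro mult_right_mono) auto
    then show ?thesis unfolding B_def c1 by simp
  qed
  obtain A where AT: "A \<in> T" and Acnt: "real (card {S \<in> Ss. bad A S}) \<le> real (card Ss) * B / real (card T)"
  proof -
    have "\<exists>A\<in>T. real (card {S \<in> Ss. bad A S}) \<le> real (card Ss) * B / real (card T)"
      by (rule avg_exists[OF fT neT fSs]) (rule fiber)
    then show ?thesis using that by blast
  qed
  have Xpos: "real (card X) > 0" using cX q2 by simp
  have ra2: "\<alpha> \<le> R" unfolding R_def using ra by simp
  have "real (card Ss) * B / real (card T) = real (R choose \<alpha>) * real (card Bad) / real (card X) ^ \<alpha>"
  proof -
    have "real (card X) ^ R = real (card X) ^ (R - \<alpha>) * real (card X) ^ \<alpha>"
      using ra2 by (simp add: power_add[symmetric])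
    then show ?thesis unfolding B_def cT cSs using Xpos by (simp add: field_simps)
  qed
  also have "\<dots> \<le> real (R choose \<alpha>) * (32/7 * Q ^ (m * s + s * (n - s))) / real (card X) ^ \<alpha>"
    using cBad Xpos by (intro divide_right_mono mult_left_mono) auto
  also have "real (card X) ^ \<alpha> = Q ^ (m * s + s * (n - s)) * Q ^ F"
  proof -
    have "real (card X) ^ \<alpha> = Q ^ (k * n * \<alpha>)" unfolding cX Q_def by (simp add: power_mult)
    also have "k * n * \<alpha> = m * n" unfolding m_def by simp
    also have "Q ^ (m * n) = Q ^ (m * s + s * (n - s)) * Q ^ F" unfolding mn_eq by (simp add: power_add)
    finally show ?thesis .
  qed
  also have "real (R choose \<alpha>) * (32/7 * Q ^ (m * s + s * (n - s))) / (Q ^ (m * s + s * (n - s)) * Q ^ F)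
      = real (R choose \<alpha>) * (32/7) / Q ^ F"
    using Q2 by (simp add: field_simps)
  also have "\<dots> \<le> real d" by (rule fin_ineq)
  finally have cb: "card {S \<in> Ss. bad A S} \<le> d" using Acnt by linarith
  define BS where "BS = {S \<in> Ss. bad A S}"
  define T0 where "T0 = I - Min ` BS"
  have fBS: "finite BS" unfolding BS_def using fSs by simp
  have cT0: "card T0 \<ge> r"
  proof -
    have "card I - card (Min ` BS) \<le> card T0" unfolding T0_def by (rule diff_card_le_card_Diff) (use fBS in simp)
    moreover have "card (Min ` BS) \<le> d" using card_image_le[OF fBS, of Min] cb unfolding BS_def by simp
    moreover have "card I = R" unfolding I_def by simp
    ultimately show ?thesis unfolding R_def by linarith
  qed
  have fT0: "finite T0" unfolding T0_def using fI by simp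
  define L where "L = sorted_list_of_set T0"
  have lenL: "length L = card T0" unfolding L_def by simp
  have setL: "set L = T0" unfolding L_def using fT0 by simp
  have swL: "sorted_wrt (<) L" unfolding L_def by (rule strict_sorted_list_of_set)
  define g where "g = (\<lambda>i::nat. L ! (i - 1))"
  have gT0: "g i \<in> T0" if "i \<in> {1..r}" for i
  proof -
    have "i - 1 < length L" using that cT0 lenL by auto
    then show ?thesis unfolding g_def using setL nth_mem by blast
  qed
  have gmono: "strict_mono_on {1..r} g"
  proof (rule strict_mono_onI)
    fix i j assume "i \<in> {1..r}" "j \<in> {1..r}" "i < j"
    then have "i - 1 < j - 1" "j - 1 < length L" using cT0 lenL by auto
    then show "g i < g j" unfolding g_def using swL by (simp add: sorted_wrt_nth_less)
  qed
  define A' where "A' = (\<lambda>i. A (g i))"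
  show ?thesis
  proof (intro exI[of _ A'] conjI ballI allI impI)
    fix i assume i: "i \<in> {1..r}"
    have "g i \<in> I" using gT0[OF i] unfolding T0_def by simp
    then have "A (g i) \<in> X" using AT unfolding T_def by auto
    then show "A' i \<in> carrier_mat (l * t) (h * t)" unfolding A'_def X_def k_def n_def by simp
  next
    fix S assume S: "S \<subseteq> {1..r} \<and> card S = \<alpha>"
    have fS: "finite S" using S finite_subset by blast
    have smS: "strict_mono_on S g"
    proof (rule strict_mono_onI)
      fix i j assume "i \<in> S" "j \<in> S" "i < j"
      then show "g i < g j" using gmono S by (auto intro: strict_mono_onD)
    qed
    have st: "stack_mat k n A' (sorted_list_of_set S) = stack_mat k n A (sorted_list_of_set (g ` S))"
      unfolding A'_def stack_map sorted_image_mono[OF smS fS] ..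
    have gS: "g ` S \<subseteq> T0" using gT0 S by auto
    have cgS: "card (g ` S) = \<alpha>" using S card_image strict_mono_on_imp_inj_on[OF smS] by metis
    have gSS: "g ` S \<in> Ss" unfolding Ss_def using gS cgS unfolding T0_def by auto
    have notbad: "\<not> bad A (g ` S)"
    proof
      assume b: "bad A (g ` S)"
      then have "g ` S \<in> BS" unfolding BS_def using gSS by simp
      then have "Min (g ` S) \<in> Min ` BS" by simp
      moreover have "Min (g ` S) \<in> g ` S"
      proof (rule Min_in)
        show "finite (g ` S)" using fS by simp
        show "g ` S \<noteq> {}" using cgS a2 by auto
      qed
      ultimately show False using gS unfolding T0_def by auto
    qed
    then have "N \<le> mat_rank (stack_mat k n A' (sorted_list_of_set S))"
      unfolding st bad_def by simp
    then have "int N \<le> int (mat_rank (stack_mat (l * t) (h * t) A' (sorted_list_of_set S)))"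
      unfolding k_def n_def by simp
    moreover have "int N = (int h - int \<epsilon>) * int t" unfolding N_def using he by (simp add: of_nat_diff)
    ultimately show "int (mat_rank (stack_mat (l * t) (h * t) A' (sorted_list_of_set S))) \<ge> (int h - int \<epsilon>) * int t"
      by simp
  qed
qed

end
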